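(* Let $\rho$ be a nonuniform congruence on the symplectic rook monoid $\mathcal{SR}_n$ ($n=2m\ge2$). Then there is either some $k\in\{1,\dots,m\}$ and a normal subgroup $N\unlhd S_k$, or (with $k=n$) a normal subgroup $N\unlhd W$, such that $\rho$ coincides with $\equiv_N$.
   Context: Let $m\ge 1$, $n=2m$, $\mathbf n=\{1,\dots,n\}$, $\theta(i)=n+1-i$, written $\bar i$. A proper subset $I\subset\mathbf n$ is admissible if $I\cap\theta(I)=\emptyset$; $\mathbf n$ and $\emptyset$ are also declared admissible. For an injective partial map $\sigma$ of $\mathbf n$, $I(\sigma)$ is its domain, $J(\sigma)$ its image, $\mathrm{rk}(\sigma)=|I(\sigma)|$; products are compositions of partial maps. $W=\{\sigma\in S_n:\sigma(\bar i)=\overline{\sigma(i)}\ \forall i\}$. $\mathcal{SR}_n$ is the monoid of all injective partial maps $\sigma$ of $\mathbf n$ such that either both $I(\sigma),J(\sigma)$ are proper admissible subsets, or $\sigma\in W$. A congruence is nonuniform if it is not the universal relation. Write $\sigma\mathcal H\tau$ if $I(\sigma)=I(\tau)$ and $J(\sigma)=J(\tau)$. For $k\in\{1,\dots,m\}$ and $N\unlhd S_k$, and for $\sigma\mathcal H\tau$ of rank $k$, "$\tau=\mu(\sigma)$ with $\mu\in N$" means: for an enumeration $a_1,\dots,a_k$ of $I(\sigma)$ with $b_i=\sigma(a_i)$, $\tau(a_i)=b_{\mu(i)}$ for all $i$. For $k=n$ and $N\unlhd W$, for $\sigma,\tau$ of rank $n$ it means $\tau=\sigma\mu$ (i.e.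 $\tau(i)=\sigma(\mu(i))$) with $\mu\in N$. The relation $\equiv_N$ on $\mathcal{SR}_n$: if $\mathrm{rk}(\sigma)<k$, then $\sigma\equiv_N\tau$ iff $\mathrm{rk}(\tau)<k$; if $\mathrm{rk}(\sigma)=k$, then $\sigma\equiv_N\tau$ iff $\sigma\mathcal H\tau$ and $\tau=\mu(\sigma)$ for some $\mu\in N$; if $\mathrm{rk}(\sigma)>k$, then $\sigma\equiv_N\tau$ iff $\sigma=\tau$. *)

theory Defs
  imports "HOL-Algebra.Sym_Groups"
begin

text \<open>Injective partial maps of {1..n} are modelled as maps nat \<rightharpoonup> nat.\<close>

definition theta :: "nat \<Rightarrow> nat \<Rightarrow> nat" where
  "theta n i = n + 1 - i"

definition admissible :: "nat \<Rightarrow> nat set \<Rightarrow> bool" where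
  "admissible n I \<longleftrightarrow> I \<subseteq> {1..n} \<and> (I = {1..n} \<or> I \<inter> theta n ` I = {})"

definition proper_admissible :: "nat \<Rightarrow> nat set \<Rightarrow> bool" where
  "proper_admissible n I \<longleftrightarrow> admissible n I \<and> I \<noteq> {1..n}"

definition partial_inj :: "nat \<Rightarrow> (nat \<rightharpoonup> nat) \<Rightarrow> bool" where
  "partial_inj n \<sigma> \<longleftrightarrow> dom \<sigma> \<subseteq> {1..n} \<and> ran \<sigma> \<subseteq> {1..n} \<and> inj_on \<sigma> (dom \<sigma>)"

definition rk :: "(nat \<rightharpoonup> nat) \<Rightarrow> nat" where
  "rk \<sigma> = card (dom \<sigma>)"

definition inW :: "nat \<Rightarrow> (nat \<rightharpoonup> nat) \<Rightarrow> bool" where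
  "inW n \<sigma> \<longleftrightarrow> partial_inj n \<sigma> \<and> dom \<sigma> = {1..n} \<and> ran \<sigma> = {1..n} \<and>
     (\<forall>i\<in>{1..n}. \<sigma> (theta n i) = map_option (theta n) (\<sigma> i))"

definition SR :: "nat \<Rightarrow> (nat \<rightharpoonup> nat) set" where
  "SR n = {\<sigma>. partial_inj n \<sigma> \<and>
     ((proper_admissible n (dom \<sigma>) \<and> proper_admissible n (ran \<sigma>)) \<or> inW n \<sigma>)}"

definition is_congruence :: "nat \<Rightarrow> ((nat \<rightharpoonup> nat) \<times> (nat \<rightharpoonup> nat)) set \<Rightarrow> bool" where
  "is_congruence n \<rho> \<longleftrightarrow> equiv (SR n) \<rho> \<and>
     (\<forall>a b c. (a, b) \<in> \<rho> \<and> c \<in> SR n \<longrightarrow>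
        (c \<circ>\<^sub>m a, c \<circ>\<^sub>m b) \<in> \<rho> \<and> (a \<circ>\<^sub>m c, b \<circ>\<^sub>m c) \<in> \<rho>)"

definition W_group :: "nat \<Rightarrow> (nat \<Rightarrow> nat) monoid" where
  "W_group n = \<lparr>carrier = {p. p permutes {1..n} \<and> (\<forall>i\<in>{1..n}. p (theta n i) = theta n (p i))},
                mult = (\<circ>), one = id\<rparr>"

definition H_rel :: "(nat \<rightharpoonup> nat) \<Rightarrow> (nat \<rightharpoonup> nat) \<Rightarrow> bool" where
  "H_rel \<sigma> \<tau> \<longleftrightarrow> dom \<sigma> = dom \<tau> \<and> ran \<sigma> = ran \<tau>"

definition congS :: "nat \<Rightarrow> nat \<Rightarrow> (nat \<Rightarrow> nat) set \<Rightarrow> ((nat \<rightharpoonup> nat) \<times> (nat \<rightharpoonup> nat)) set" where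
  "congS n k N = {(\<sigma>, \<tau>). \<sigma> \<in> SR n \<and> \<tau> \<in> SR n \<and>
     (if rk \<sigma> < k then rk \<tau> < k
      else if rk \<sigma> = k then H_rel \<sigma> \<tau> \<and>
        (\<exists>a. bij_betw a {1..k} (dom \<sigma>) \<and>
           (\<exists>\<mu>\<in>N. \<forall>i\<in>{1..k}. \<tau> (a i) = \<sigma> (a (\<mu> i))))
      else \<sigma> = \<tau>)}"

definition congW :: "nat \<Rightarrow> (nat \<Rightarrow> nat) set \<Rightarrow> ((nat \<rightharpoonup> nat) \<times> (nat \<rightharpoonup> nat)) set" where
  "congW n N = {(\<sigma>, \<tau>). \<sigma> \<in> SR n \<and> \<tau> \<in> SR n \<and>
     (if rk \<sigma> < n then rk \<tau> < n
      else if rk \<sigma> = n then (\<exists>\<mu>\<in>N. \<forall>i\<in>{1..n}. \<tau> i = \<sigma> (\<mu> i))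
      else \<sigma> = \<tau>)}"

end

theory Submission
  imports Defs
begin

lemma normal_from_rel:
  fixes G :: "('a \<Rightarrow> 'a) monoid" (structure)
  assumes G: "group G" and mG: "mult G = (\<circ>)" and oG: "one G = id"
  and Rr: "\<And>\<mu>. \<mu> \<in> carrier G \<Longrightarrow> (\<mu>,\<mu>) \<in> R"
  and Rs: "\<And>a b. (a,b) \<in> R \<Longrightarrow> (b,a) \<in> R"
  and Rt: "\<And>a b c. (a,b)\<in>R \<Longrightarrow> (b,c)\<in>R \<Longrightarrow> (a,c)\<in>R"
  and L: "\<And>x a b. x \<in> carrier G \<Longrightarrow> a \<in> carrier G \<Longrightarrow> b \<in> carrier G \<Longrightarrow> (a,b) \<in> R \<Longrightarrow> (x\<circ>a, x\<circ>b) \<in> R"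
  and Ri: "\<And>x a b. x \<in> carrier G \<Longrightarrow> a \<in> carrier G \<Longrightarrow> b \<in> carrier G \<Longrightarrow> (a,b) \<in> R \<Longrightarrow> (a\<circ>x, b\<circ>x) \<in> R"
  shows "{\<mu> \<in> carrier G. (id, \<mu>) \<in> R} \<lhd> G"
proof -
  interpret group G by (rule G)
  have one: "id \<in> carrier G" using one_closed oG by simp
  have li: "\<And>a. a \<in> carrier G \<Longrightarrow> inv a \<circ> a = id" using l_inv mG oG by metis
  have ri: "\<And>a. a \<in> carrier G \<Longrightarrow> a \<circ> inv a = id" using r_inv mG oG by metis
  have sub: "subgroup {\<mu> \<in> carrier G. (id, \<mu>) \<in> R} G"
  proof (rule subgroupI)
    show "{\<mu> \<in> carrier G. (id, \<mu>) \<in> R} \<noteq> {}" using one Rr by blast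
  next
    fix a assume a: "a \<in> {\<mu> \<in> carrier G. (id, \<mu>) \<in> R}"
    have "(inv a \<circ> id, inv a \<circ> a) \<in> R" using L[of "inv a" id a] a one by auto
    then show "inv a \<in> {\<mu> \<in> carrier G. (id, \<mu>) \<in> R}" using li[of a] a Rs by auto
  next
    fix a b assume a: "a \<in> {\<mu> \<in> carrier G. (id, \<mu>) \<in> R}" and b: "b \<in> {\<mu> \<in> carrier G. (id, \<mu>) \<in> R}"
    have "(a \<circ> id, a \<circ> b) \<in> R" using L[of a id b] a b one by auto
    then have "(id, a \<circ> b) \<in> R" using a Rt by auto
    moreover have "a \<otimes> b \<in> carrier G" using a b by auto
    ultimately show "a \<otimes> b \<in> {\<mu> \<in> carrier G. (id, \<mu>) \<in> R}" using mG by auto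
  qed auto
  show ?thesis unfolding normal_inv_iff
  proof (intro conjI ballI sub)
    fix x h assume x: "x \<in> carrier G" and h: "h \<in> {\<mu> \<in> carrier G. (id, \<mu>) \<in> R}"
    have "(x \<circ> id, x \<circ> h) \<in> R" using L[of x id h] x h one by auto
    then have "(x \<circ> inv x, x \<circ> h \<circ> inv x) \<in> R" using Ri[of "inv x" x "x \<circ> h"] x h mG
      by (metis (no_types, lifting) comp_id inv_closed m_closed mem_Collect_eq)
    then show "x \<otimes> h \<otimes> inv x \<in> {\<mu> \<in> carrier G. (id, \<mu>) \<in> R}"
    proof -
      have "x \<otimes> h \<otimes> inv x \<in> carrier G" using x h by auto
      then show ?thesis using ri[OF x] mG x h \<open>(x \<circ> inv x, x \<circ> h \<circ> inv x) \<in> R\<close> by auto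
    qed
  qed
qed

lemma theta_in: "i \<in> {1..n} \<Longrightarrow> theta n i \<in> {1..n}" by (auto simp: theta_def)
lemma theta_theta: "i \<in> {1..n} \<Longrightarrow> theta n (theta n i) = i" by (auto simp: theta_def)

lemma W_sub: "subgroup (carrier (W_group n)) (sym_group n)"
proof (rule group.subgroupI[OF sym_group_is_group])
  show "carrier (W_group n) \<subseteq> carrier (sym_group n)" by (auto simp: W_group_def sym_group_def)
  show "carrier (W_group n) \<noteq> {}" by (auto simp: W_group_def permutes_id intro!: exI[of _ id])
next
  fix a assume a: "a \<in> carrier (W_group n)"
  then have ap: "a permutes {1..n}" by (auto simp: W_group_def)
  have "\<forall>i\<in>{1..n}. inv' a (theta n i) = theta n (inv' a i)"
  proof
    fix i assume i: "i \<in> {1..n}"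
    define j where "j = inv' a i"
    have j1: "j \<in> {1..n}" using permutes_in_image[OF permutes_inv[OF ap]] i unfolding j_def by blast
    have j: "j \<in> {1..n}" "a j = i" using j1 ap unfolding j_def
      by (auto simp: permutes_inverses)
    have "a (theta n j) = theta n i" using a j by (auto simp: W_group_def)
    then show "inv' a (theta n i) = theta n (inv' a i)" unfolding j_def[symmetric]
      by (metis ap permutes_inverses(2))
  qed
  then show "inv\<^bsub>sym_group n\<^esub> a \<in> carrier (W_group n)"
    using ap by (simp add: W_group_def sym_group_carrier permutes_inv)
next
  fix a b assume "a \<in> carrier (W_group n)" "b \<in> carrier (W_group n)"
  then show "a \<otimes>\<^bsub>sym_group n\<^esub> b \<in> carrier (W_group n)"
    apply (auto simp: W_group_def sym_group_def permutes_compose)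
    by (metis atLeastAtMost_iff permutes_in_image theta_in One_nat_def)
qed

lemma W_group_is_group: "group (W_group n)"
proof -
  have "W_group n = (sym_group n)\<lparr>carrier := carrier (W_group n)\<rparr>"
    by (simp add: W_group_def sym_group_def)
  then show ?thesis using subgroup.subgroup_is_group[OF W_sub[of n] sym_group_is_group] by simp
qed



definition id_on :: "nat set \<Rightarrow> (nat \<rightharpoonup> nat)" where
  "id_on D = (\<lambda>x. if x \<in> D then Some x else None)"
definition PM :: "nat set \<Rightarrow> (nat \<Rightarrow> nat) \<Rightarrow> (nat \<rightharpoonup> nat)" where
  "PM S f = (\<lambda>x. if x \<in> S then Some (f x) else None)"
definition pinv :: "(nat \<rightharpoonup> nat) \<Rightarrow> (nat \<rightharpoonup> nat)" where
  "pinv \<phi> = (\<lambda>y. if y \<in> ran \<phi> then Some (SOME x. \<phi> x = Some y) else None)"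

lemma id_on_PM: "id_on D = PM D id" by (auto simp: id_on_def PM_def)
lemma dom_id_on[simp]: "dom (id_on D) = D" by (auto simp: id_on_def dom_def)
lemma ran_id_on[simp]: "ran (id_on D) = D" by (auto simp: id_on_def ran_def)
lemma dom_PM[simp]: "dom (PM S f) = S" by (auto simp: PM_def dom_def)
lemma ran_PM[simp]: "ran (PM S f) = f ` S" by (auto simp: PM_def ran_def)
lemma inj_PM: "inj_on f S \<Longrightarrow> inj_on (PM S f) (dom (PM S f))"
  by (auto simp: PM_def inj_on_def)
lemma inj_id_on: "inj_on (id_on D) (dom (id_on D))" by (auto simp: id_on_def inj_on_def)

lemma comp_id_on_r: "(\<sigma> \<circ>\<^sub>m id_on D) x = (if x \<in> D then \<sigma> x else None)"
  by (auto simp: id_on_def map_comp_def)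
lemma comp_id_on_l: "(id_on D \<circ>\<^sub>m \<sigma>) x = (case \<sigma> x of None \<Rightarrow> None | Some y \<Rightarrow> if y \<in> D then Some y else None)"
  by (auto simp: id_on_def map_comp_def split: option.splits)
lemma comp_id_on_r_eq: "dom \<sigma> \<subseteq> D \<Longrightarrow> \<sigma> \<circ>\<^sub>m id_on D = \<sigma>"
  by (rule ext) (auto simp: comp_id_on_r, metis domIff subsetD)
lemma comp_id_on_l_eq: "ran \<sigma> \<subseteq> D \<Longrightarrow> id_on D \<circ>\<^sub>m \<sigma> = \<sigma>"
  by (rule ext) (auto simp: comp_id_on_l ran_def split: option.splits)
lemma PM_comp: "f ` S \<subseteq> S \<Longrightarrow> PM S g \<circ>\<^sub>m PM S f = PM S (g \<circ> f)"
  by (rule ext) (auto simp: PM_def map_comp_def)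

lemma dom_comp: "dom (f \<circ>\<^sub>m g) = {x. \<exists>y. g x = Some y \<and> y \<in> dom f}"
  by (auto simp: dom_def map_comp_def split: option.splits)
lemma ran_comp_sub: "ran (f \<circ>\<^sub>m g) \<subseteq> ran f"
  by (auto simp: ran_def map_comp_def split: option.splits)
lemma ran_comp_sub2: "ran (f \<circ>\<^sub>m g) \<subseteq> {z. \<exists>y\<in>ran g. f y = Some z}"
  by (auto simp: ran_def map_comp_def split: option.splits)
lemma dom_comp_sub: "dom (f \<circ>\<^sub>m g) \<subseteq> dom g"
  by (auto simp: dom_def map_comp_def split: option.splits)
lemma inj_comp: "inj_on f (dom f) \<Longrightarrow> inj_on g (dom g) \<Longrightarrow> inj_on (f \<circ>\<^sub>m g) (dom (f \<circ>\<^sub>m g))"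
  unfolding inj_on_def dom_def map_comp_def
  by (auto split: option.splits)

lemma pinv_Some: assumes "inj_on \<phi> (dom \<phi>)" "\<phi> x = Some y" shows "pinv \<phi> y = Some x"
proof -
  have r: "y \<in> ran \<phi>" using assms by (auto simp: ran_def)
  have "\<phi> (SOME x. \<phi> x = Some y) = Some y" using someI[of "\<lambda>x. \<phi> x = Some y" x] assms by auto
  then have "(SOME x. \<phi> x = Some y) = x" using assms(1) assms(2) unfolding inj_on_def
    by (metis domI)
  then show ?thesis using r by (simp add: pinv_def)
qed
lemma pinv_None: "y \<notin> ran \<phi> \<Longrightarrow> pinv \<phi> y = None" by (simp add: pinv_def)
lemma pinv_Some_iff: assumes "inj_on \<phi> (dom \<phi>)" shows "pinv \<phi> y = Some x \<longleftrightarrow> \<phi> x = Some y"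
proof
  assume h: "pinv \<phi> y = Some x"
  then have "y \<in> ran \<phi>" by (auto simp: pinv_def split: if_splits)
  then obtain x' where "\<phi> x' = Some y" by (auto simp: ran_def)
  then show "\<phi> x = Some y" using pinv_Some[OF assms] h by auto
qed (rule pinv_Some[OF assms])
lemma dom_pinv[simp]: "dom (pinv \<phi>) = ran \<phi>" unfolding pinv_def dom_def by auto
lemma ran_pinv: assumes "inj_on \<phi> (dom \<phi>)" shows "ran (pinv \<phi>) = dom \<phi>"
  using pinv_Some_iff[OF assms] by (auto simp: ran_def dom_def)
lemma inj_pinv: assumes "inj_on \<phi> (dom \<phi>)" shows "inj_on (pinv \<phi>) (dom (pinv \<phi>))"
  using pinv_Some_iff[OF assms] unfolding inj_on_def by (auto simp: ran_def) (metis option.inject)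
lemma pinv_comp_l: assumes "inj_on \<phi> (dom \<phi>)" shows "pinv \<phi> \<circ>\<^sub>m \<phi> = id_on (dom \<phi>)"
  by (rule ext) (auto simp: map_comp_def id_on_def pinv_Some[OF assms] split: option.splits)
lemma pinv_comp_r: assumes "inj_on \<phi> (dom \<phi>)" shows "\<phi> \<circ>\<^sub>m pinv \<phi> = id_on (ran \<phi>)"
proof (rule ext)
  fix y show "(\<phi> \<circ>\<^sub>m pinv \<phi>) y = id_on (ran \<phi>) y"
  proof (cases "y \<in> ran \<phi>")
    case True
    then obtain x where "\<phi> x = Some y" by (auto simp: ran_def)
    then show ?thesis using True pinv_Some[OF assms] by (auto simp: id_on_def)
  qed (auto simp: id_on_def pinv_None)
qed



locale srctx =
  fixes m n :: nat
  assumes m1: "m \<ge> 1" and nm: "n = 2 * m"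
begin

abbreviation "pa \<equiv> proper_admissible n"
abbreviation "\<theta> \<equiv> theta n"

lemma theta_neq: "x \<in> {1..n} \<Longrightarrow> \<theta> x \<noteq> x"
  using nm by (simp add: theta_def) presburger

lemma pa_iff: "pa I \<longleftrightarrow> I \<subseteq> {1..n} \<and> (\<forall>x\<in>I. \<theta> x \<notin> I)"
proof
  assume "pa I"
  then show "I \<subseteq> {1..n} \<and> (\<forall>x\<in>I. \<theta> x \<notin> I)"
    unfolding proper_admissible_def admissible_def by (auto simp: theta_in)
next
  assume h: "I \<subseteq> {1..n} \<and> (\<forall>x\<in>I. \<theta> x \<notin> I)"
  have "1 \<in> {1..n}" "\<theta> 1 \<in> {1..n}" using nm m1 by (auto simp: theta_def)
  then have "I \<noteq> {1..n}" using h by blast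
  moreover have "I \<inter> \<theta> ` I = {}"
  proof (rule ccontr)
    assume "I \<inter> \<theta> ` I \<noteq> {}"
    then obtain x y where "x \<in> I" "y \<in> I" "x = \<theta> y" by auto
    then show False using h by auto
  qed
  ultimately show "pa I" using h unfolding proper_admissible_def admissible_def by auto
qed

lemma pa_subset: "pa I \<Longrightarrow> J \<subseteq> I \<Longrightarrow> pa J"
  unfolding pa_iff by blast

lemma pa_card: assumes "pa I" shows "card I \<le> m"
proof -
  have s: "I \<subseteq> {1..n}" "\<forall>x\<in>I. \<theta> x \<notin> I" using assms pa_iff by auto
  have "inj_on \<theta> I" using s by (auto simp: inj_on_def theta_def dest!: subsetD[OF s(1)])
  then have c: "card (\<theta> ` I) = card I" by (rule card_image)
  have "\<theta> ` I \<subseteq> {1..n}" using s theta_in by auto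
  then have "I \<union> \<theta> ` I \<subseteq> {1..n}" using s by auto
  then have "card (I \<union> \<theta> ` I) \<le> n" by (metis card_atLeastAtMost card_mono diff_Suc_1 finite_atLeastAtMost)
  moreover have "card (I \<union> \<theta> ` I) = card I + card (\<theta> ` I)"
    using s by (intro card_Un_disjoint) (auto intro: finite_subset)
  ultimately show ?thesis using c nm by auto
qed

lemma fin: "I \<subseteq> {1..n} \<Longrightarrow> finite I" by (rule finite_subset) auto

lemma SR_pij: "\<sigma> \<in> SR n \<Longrightarrow> dom \<sigma> \<subseteq> {1..n} \<and> ran \<sigma> \<subseteq> {1..n} \<and> inj_on \<sigma> (dom \<sigma>)"
  by (auto simp: SR_def partial_inj_def)

lemma SR_W_rk: "inW n \<sigma> \<Longrightarrow> rk \<sigma> = n" by (auto simp: inW_def rk_def)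

lemma SR_notW: assumes "\<sigma> \<in> SR n" "\<not> inW n \<sigma>"
  shows "pa (dom \<sigma>)" "pa (ran \<sigma>)" "rk \<sigma> \<le> m"
  using assms pa_card by (auto simp: SR_def rk_def)

lemma SR_rk: "\<sigma> \<in> SR n \<Longrightarrow> rk \<sigma> \<le> n"
  using SR_W_rk SR_notW nm by fastforce

lemma SR_W_iff: "\<sigma> \<in> SR n \<Longrightarrow> inW n \<sigma> \<longleftrightarrow> rk \<sigma> = n"
  using SR_W_rk SR_notW nm m1 by fastforce

lemma SR_domfull: assumes "\<sigma> \<in> SR n" "dom \<sigma> = {1..n}" shows "inW n \<sigma>"
proof (rule ccontr)
  assume "\<not> inW n \<sigma>"
  then have "pa (dom \<sigma>)" by (rule SR_notW(1)[OF assms(1)])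
  then show False using assms(2) unfolding proper_admissible_def by simp
qed

lemma SR_I: "inj_on \<sigma> (dom \<sigma>) \<Longrightarrow> pa (dom \<sigma>) \<Longrightarrow> pa (ran \<sigma>) \<Longrightarrow> \<sigma> \<in> SR n"
  unfolding SR_def partial_inj_def using pa_iff by auto

lemma inW_image: assumes w: "inW n \<sigma>" and I: "pa I" shows "pa {y. \<exists>x\<in>I. \<sigma> x = Some y}"
  unfolding pa_iff
proof safe
  fix y x assume "x \<in> I" "\<sigma> x = Some y"
  then show "y \<in> {1..n}" using w by (auto simp: inW_def ran_def)
next
  fix x y x' assume x: "x \<in> I" "\<sigma> x = Some y" and x': "x' \<in> I" "\<sigma> x' = Some (\<theta> y)"
  have "x \<in> {1..n}" using x I pa_iff by auto
  then have "\<sigma> (\<theta> x) = Some (\<theta> y)" using w x by (auto simp: inW_def)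
  then have "\<theta> x = x'" using w x' unfolding inW_def partial_inj_def inj_on_def by (metis domI)
  then show False using x x' I pa_iff by auto
qed

lemma comp_SR: assumes s: "\<sigma> \<in> SR n" and t: "\<tau> \<in> SR n" shows "\<sigma> \<circ>\<^sub>m \<tau> \<in> SR n"
proof -
  have ps: "dom \<sigma> \<subseteq> {1..n}" "ran \<sigma> \<subseteq> {1..n}" "inj_on \<sigma> (dom \<sigma>)" using SR_pij[OF s] by auto
  have pt: "dom \<tau> \<subseteq> {1..n}" "ran \<tau> \<subseteq> {1..n}" "inj_on \<tau> (dom \<tau>)" using SR_pij[OF t] by auto
  have pij: "partial_inj n (\<sigma> \<circ>\<^sub>m \<tau>)" unfolding partial_inj_def
    using dom_comp_sub[of \<sigma> \<tau>] ran_comp_sub[of \<sigma> \<tau>] inj_comp[OF ps(3) pt(3)] ps pt by blast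
  show ?thesis
  proof (cases "inW n \<tau>")
    case tw: True
    show ?thesis
    proof (cases "inW n \<sigma>")
      case sw: True
      have d: "dom (\<sigma> \<circ>\<^sub>m \<tau>) = {1..n}"
      proof
        show "dom (\<sigma> \<circ>\<^sub>m \<tau>) \<subseteq> {1..n}" using pij by (auto simp: partial_inj_def)
        show "{1..n} \<subseteq> dom (\<sigma> \<circ>\<^sub>m \<tau>)"
        proof
          fix x assume x: "x \<in> {1..n}"
          then have "x \<in> dom \<tau>" using tw by (auto simp: inW_def)
          then obtain y where y: "\<tau> x = Some y" by auto
          then have "y \<in> dom \<sigma>" using tw sw by (auto simp: inW_def ran_def)
          then show "x \<in> dom (\<sigma> \<circ>\<^sub>m \<tau>)" using y by (auto simp: dom_comp)
        qed
      qed
      have r: "ran (\<sigma> \<circ>\<^sub>m \<tau>) = {1..n}"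
      proof
        show "ran (\<sigma> \<circ>\<^sub>m \<tau>) \<subseteq> {1..n}" using pij by (auto simp: partial_inj_def)
        show "{1..n} \<subseteq> ran (\<sigma> \<circ>\<^sub>m \<tau>)"
        proof
          fix z assume z: "z \<in> {1..n}"
          then have "z \<in> ran \<sigma>" using sw by (auto simp: inW_def)
          then obtain y where y: "\<sigma> y = Some z" by (auto simp: ran_def)
          then have "y \<in> {1..n}" using sw by (auto simp: inW_def dom_def)
          then have "y \<in> ran \<tau>" using tw by (auto simp: inW_def)
          then obtain x where x: "\<tau> x = Some y" by (auto simp: ran_def)
          then show "z \<in> ran (\<sigma> \<circ>\<^sub>m \<tau>)" using y by (metis map_comp_simps(2) ranI)
        qed
      qed
      have th: "\<forall>i\<in>{1..n}. (\<sigma> \<circ>\<^sub>m \<tau>) (\<theta> i) = map_option \<theta> ((\<sigma> \<circ>\<^sub>m \<tau>) i)"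
      proof
        fix i assume i: "i \<in> {1..n}"
        then have "i \<in> dom \<tau>" using tw by (auto simp: inW_def)
        then obtain y where y: "\<tau> i = Some y" by auto
        then have yn: "y \<in> {1..n}" using tw by (auto simp: inW_def ran_def)
        have "\<tau> (\<theta> i) = Some (\<theta> y)" using tw i y by (auto simp: inW_def)
        moreover have "\<sigma> (\<theta> y) = map_option \<theta> (\<sigma> y)" using sw yn by (auto simp: inW_def)
        ultimately show "(\<sigma> \<circ>\<^sub>m \<tau>) (\<theta> i) = map_option \<theta> ((\<sigma> \<circ>\<^sub>m \<tau>) i)" using y by simp
      qed
      show ?thesis using pij d r th by (auto simp: SR_def inW_def)
    next
      case sn: False
      have "pa (ran (\<sigma> \<circ>\<^sub>m \<tau>))" by (rule pa_subset[OF SR_notW(2)[OF s sn] ran_comp_sub])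
      moreover have "pa (dom (\<sigma> \<circ>\<^sub>m \<tau>))" unfolding pa_iff
      proof (intro conjI ballI)
        show "dom (\<sigma> \<circ>\<^sub>m \<tau>) \<subseteq> {1..n}" using pij unfolding partial_inj_def by blast
      next
        fix x assume x: "x \<in> dom (\<sigma> \<circ>\<^sub>m \<tau>)"
        show "\<theta> x \<notin> dom (\<sigma> \<circ>\<^sub>m \<tau>)"
        proof
          assume x2: "\<theta> x \<in> dom (\<sigma> \<circ>\<^sub>m \<tau>)"
          obtain y where y: "\<tau> x = Some y" "y \<in> dom \<sigma>" using x unfolding dom_comp by blast
          have xn: "x \<in> {1..n}" using x pij unfolding partial_inj_def by blast
          then have "\<tau> (\<theta> x) = Some (\<theta> y)" using tw y unfolding inW_def by simp
          then have "\<theta> y \<in> dom \<sigma>" using x2 unfolding dom_comp by auto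
          moreover have "\<forall>z\<in>dom \<sigma>. \<theta> z \<notin> dom \<sigma>" using SR_notW(1)[OF s sn] unfolding pa_iff by (rule conjunct2)
          ultimately show False using y by blast
        qed
      qed
      ultimately show ?thesis using pij unfolding SR_def by simp
    qed
  next
    case tn: False
    have "pa (dom (\<sigma> \<circ>\<^sub>m \<tau>))" by (rule pa_subset[OF SR_notW(1)[OF t tn] dom_comp_sub])
    moreover have "pa (ran (\<sigma> \<circ>\<^sub>m \<tau>))"
    proof (cases "inW n \<sigma>")
      case True
      have "pa {z. \<exists>y\<in>ran \<tau>. \<sigma> y = Some z}" using inW_image[OF True SR_notW(2)[OF t tn]] by simp
      then show ?thesis by (rule pa_subset[OF _ ran_comp_sub2])
    next
      case False
      show ?thesis by (rule pa_subset[OF SR_notW(2)[OF s False] ran_comp_sub])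
    qed
    ultimately show ?thesis using pij unfolding SR_def by simp
  qed
qed

lemma pinv_SR: assumes s: "\<sigma> \<in> SR n" shows "pinv \<sigma> \<in> SR n"
proof -
  have ps: "dom \<sigma> \<subseteq> {1..n}" "ran \<sigma> \<subseteq> {1..n}" "inj_on \<sigma> (dom \<sigma>)" using SR_pij[OF s] by auto
  have pij: "partial_inj n (pinv \<sigma>)" using ps ran_pinv[OF ps(3)] inj_pinv[OF ps(3)]
    by (auto simp: partial_inj_def)
  show ?thesis
  proof (cases "inW n \<sigma>")
    case True
    have th: "\<forall>i\<in>{1..n}. pinv \<sigma> (\<theta> i) = map_option \<theta> (pinv \<sigma> i)"
    proof
      fix i assume i: "i \<in> {1..n}"
      then have "i \<in> ran \<sigma>" using True by (auto simp: inW_def)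
      then obtain a where a: "\<sigma> a = Some i" by (auto simp: ran_def)
      then have an: "a \<in> {1..n}" using True by (auto simp: inW_def dom_def)
      have "\<sigma> (\<theta> a) = Some (\<theta> i)" using True an a by (auto simp: inW_def)
      then show "pinv \<sigma> (\<theta> i) = map_option \<theta> (pinv \<sigma> i)"
        using pinv_Some[OF ps(3)] a by auto
    qed
    then have "inW n (pinv \<sigma>)" using True pij ran_pinv[OF ps(3)] by (auto simp: inW_def)
    then show ?thesis using pij by (auto simp: SR_def)
  next
    case False
    then show ?thesis using pij SR_notW[OF s False] ran_pinv[OF ps(3)] by (auto simp: SR_def)
  qed
qed

lemma id_on_SR: "pa D \<Longrightarrow> id_on D \<in> SR n"
  using SR_I[OF inj_id_on] by auto

lemma id_full_SR: "id_on {1..n} \<in> SR n"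
proof -
  have "\<forall>i\<in>{1..n}. id_on {1..n} (\<theta> i) = map_option \<theta> (id_on {1..n} i)"
  proof
    fix i assume i: "i \<in> {1..n}"
    have "\<theta> i \<in> {1..n}" using theta_in[OF i] .
    then show "id_on {1..n} (\<theta> i) = map_option \<theta> (id_on {1..n} i)" using i unfolding id_on_def by simp
  qed
  moreover have "partial_inj n (id_on {1..n})" unfolding partial_inj_def using inj_id_on[of "{1..n}"]
    by (simp only: dom_id_on ran_id_on) blast
  ultimately have "inW n (id_on {1..n})"
    unfolding inW_def by (simp only: dom_id_on ran_id_on)
  then show ?thesis unfolding SR_def inW_def by simp
qed

lemma empty_SR: "Map.empty \<in> SR n"
  by (rule SR_I) (auto simp: pa_iff)

lemma rk_comp_id_r: "E \<subseteq> dom \<sigma> \<Longrightarrow> rk (\<sigma> \<circ>\<^sub>m id_on E) = card E"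
proof -
  assume "E \<subseteq> dom \<sigma>"
  then have "dom (\<sigma> \<circ>\<^sub>m id_on E) = E" by (auto simp: dom_def comp_id_on_r)
  then show ?thesis by (simp add: rk_def)
qed

lemma rk_comp_id_l: assumes "E \<subseteq> ran \<sigma>" "inj_on \<sigma> (dom \<sigma>)" shows "rk (id_on E \<circ>\<^sub>m \<sigma>) = card E"
proof -
  define D where "D = dom (id_on E \<circ>\<^sub>m \<sigma>)"
  have D: "D = {x \<in> dom \<sigma>. the (\<sigma> x) \<in> E}"
    unfolding D_def by (auto simp: dom_def comp_id_on_l split: option.splits)
  have "inj_on (\<lambda>x. the (\<sigma> x)) D" using assms(2) unfolding D inj_on_def
    by (metis (mono_tags, lifting) domIff mem_Collect_eq option.expand)
  moreover have "(\<lambda>x. the (\<sigma> x)) ` D = E"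
  proof
    show "(\<lambda>x. the (\<sigma> x)) ` D \<subseteq> E" unfolding D by auto
    show "E \<subseteq> (\<lambda>x. the (\<sigma> x)) ` D"
    proof
      fix y assume "y \<in> E"
      then have "y \<in> ran \<sigma>" using assms by auto
      then obtain x where "\<sigma> x = Some y" by (auto simp: ran_def)
      then show "y \<in> (\<lambda>x. the (\<sigma> x)) ` D" unfolding D using \<open>y \<in> E\<close>
        by (auto intro!: image_eqI[of _ _ x])
    qed
  qed
  ultimately have "card D = card E" using card_image by fastforce
  then show ?thesis by (simp add: rk_def D_def)
qed

end


lemma map_comp_assoc: "(f \<circ>\<^sub>m g) \<circ>\<^sub>m h = f \<circ>\<^sub>m (g \<circ>\<^sub>m h)"
  by (rule ext) (simp add: map_comp_def split: option.splits)

lemma dom_comp_id_on: "dom (\<sigma> \<circ>\<^sub>m id_on E) = E \<inter> dom \<sigma>"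
  by (auto simp: dom_def comp_id_on_r)

lemma id_on_comp_restrict: "id_on E \<circ>\<^sub>m \<sigma> = id_on (E \<inter> ran \<sigma>) \<circ>\<^sub>m \<sigma>"
  by (rule ext) (auto simp: comp_id_on_l ranI split: option.splits)

context srctx begin

definition maxadm :: "nat \<Rightarrow> nat \<Rightarrow> nat set" where
  "maxadm x z = {i \<in> {1..n}. if i = x \<or> i = \<theta> x then i = x else if i = z \<or> i = \<theta> z then i = \<theta> z else i \<le> m}"

lemma maxadm_x: "x \<in> {1..n} \<Longrightarrow> x \<in> maxadm x z" by (simp add: maxadm_def)

lemma maxadm_z: "z \<in> {1..n} \<Longrightarrow> z \<noteq> x \<Longrightarrow> z \<notin> maxadm x z"
  using theta_neq[of z] by (auto simp: maxadm_def)

lemma maxadm_sub: "maxadm x z \<subseteq> {1..n}" by (auto simp: maxadm_def)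

lemma maxadm_compl: assumes "i \<in> {1..n}" "x \<in> {1..n}" "z \<in> {1..n}"
  shows "\<theta> i \<in> maxadm x z \<longleftrightarrow> i \<notin> maxadm x z"
proof -
  have ti: "\<theta> i \<in> {1..n}" using theta_in[OF assms(1)] .
  have tti: "\<theta> (\<theta> i) = i" using theta_theta[OF assms(1)] .
  have e1: "(\<theta> i = x \<or> \<theta> i = \<theta> x) \<longleftrightarrow> (i = x \<or> i = \<theta> x)"
    using assms theta_theta by metis
  have e2: "(\<theta> i = z \<or> \<theta> i = \<theta> z) \<longleftrightarrow> (i = z \<or> i = \<theta> z)"
    using assms theta_theta by metis
  have nx: "x \<noteq> \<theta> x" "z \<noteq> \<theta> z" using theta_neq assms by metis+
  have a1: "\<theta> i = x \<longleftrightarrow> i = \<theta> x" using assms theta_theta by metis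
  have a2: "\<theta> i = \<theta> z \<longleftrightarrow> i = z" using assms theta_theta by metis
  have a3: "\<theta> i \<le> m \<longleftrightarrow> \<not> i \<le> m" using assms(1) nm by (simp add: theta_def) linarith
  show ?thesis
  proof (cases "i = x \<or> i = \<theta> x")
    case True
    then show ?thesis using e1 a1 nx ti assms(1) unfolding maxadm_def by auto
  next
    case F1: False
    show ?thesis
    proof (cases "i = z \<or> i = \<theta> z")
      case True
      then show ?thesis using e1 e2 F1 a2 nx ti assms(1) unfolding maxadm_def by auto
    next
      case False
      then show ?thesis using e1 e2 F1 a3 ti assms(1) unfolding maxadm_def by auto
    qed
  qed
qed

lemma maxadm_pa: assumes "x \<in> {1..n}" "z \<in> {1..n}" shows "pa (maxadm x z)"
  unfolding pa_iff using maxadm_sub maxadm_compl[OF _ assms] by blast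

lemma maxadm_card: assumes "x \<in> {1..n}" "z \<in> {1..n}" shows "card (maxadm x z) = m"
proof -
  let ?E = "maxadm x z"
  have img: "\<theta> ` ?E = {1..n} - ?E"
  proof
    show "\<theta> ` ?E \<subseteq> {1..n} - ?E"
    proof
      fix j assume "j \<in> \<theta> ` ?E"
      then obtain e where e: "e \<in> ?E" "j = \<theta> e" by blast
      have en: "e \<in> {1..n}" using e maxadm_sub by blast
      show "j \<in> {1..n} - ?E" using e theta_in[OF en] maxadm_compl[OF en assms] by blast
    qed
    show "{1..n} - ?E \<subseteq> \<theta> ` ?E"
    proof
      fix i assume i: "i \<in> {1..n} - ?E"
      then have "\<theta> i \<in> ?E" using maxadm_compl[OF _ assms] by blast
      moreover have "i = \<theta> (\<theta> i)" using i theta_theta by auto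
      ultimately show "i \<in> \<theta> ` ?E" by blast
    qed
  qed
  have "inj_on \<theta> ?E" using maxadm_sub theta_theta by (metis inj_on_def subsetD)
  then have c1: "card ({1..n} - ?E) = card ?E" using img card_image by fastforce
  have "card ({1..n} - ?E) = n - card ?E" using maxadm_sub by (simp add: card_Diff_subset fin)
  moreover have "card ?E \<le> n" using card_mono[OF _ maxadm_sub[of x z]] by simp
  ultimately show ?thesis using c1 nm by arith
qed

end

locale cong_ctx = srctx +
  fixes \<rho>
  assumes cong: "is_congruence n \<rho>"
begin

lemma eqv: "equiv (SR n) \<rho>" using cong by (simp add: is_congruence_def)
lemma rho_SR: "(a,b) \<in> \<rho> \<Longrightarrow> a \<in> SR n \<and> b \<in> SR n"
  using eqv unfolding equiv_def refl_on_def by blast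
lemma rrefl: "a \<in> SR n \<Longrightarrow> (a,a) \<in> \<rho>"
  using eqv unfolding equiv_def refl_on_def by blast
lemma rsym: "(a,b) \<in> \<rho> \<Longrightarrow> (b,a) \<in> \<rho>"
  using eqv unfolding equiv_def sym_def by blast
lemma rtrans: "(a,b) \<in> \<rho> \<Longrightarrow> (b,c) \<in> \<rho> \<Longrightarrow> (a,c) \<in> \<rho>"
  using eqv unfolding equiv_def trans_def by blast
lemma mult_l: "(a,b) \<in> \<rho> \<Longrightarrow> c \<in> SR n \<Longrightarrow> (c \<circ>\<^sub>m a, c \<circ>\<^sub>m b) \<in> \<rho>"
  using cong unfolding is_congruence_def by blast
lemma mult_r: "(a,b) \<in> \<rho> \<Longrightarrow> c \<in> SR n \<Longrightarrow> (a \<circ>\<^sub>m c, b \<circ>\<^sub>m c) \<in> \<rho>"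
  using cong unfolding is_congruence_def by blast

definition inK :: "(nat \<rightharpoonup> nat) \<Rightarrow> bool" where
  "inK \<sigma> \<longleftrightarrow> (\<sigma>, Map.empty) \<in> \<rho>"

lemma inK_trans: "(a,b) \<in> \<rho> \<Longrightarrow> inK b \<Longrightarrow> inK a"
  unfolding inK_def using rtrans by blast
lemma inK_trans2: "(a,b) \<in> \<rho> \<Longrightarrow> inK a \<Longrightarrow> inK b"
  unfolding inK_def using rtrans rsym by blast
lemma inK_pair: "inK a \<Longrightarrow> inK b \<Longrightarrow> (a,b) \<in> \<rho>"
  unfolding inK_def using rtrans rsym by blast
lemma inK_SR: "inK a \<Longrightarrow> a \<in> SR n" unfolding inK_def using rho_SR by blast

lemma L0: assumes K: "inK \<sigma>" and t: "\<tau> \<in> SR n" and r: "rk \<tau> \<le> rk \<sigma>" shows "inK \<tau>"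
proof -
  have s: "\<sigma> \<in> SR n" using inK_SR[OF K] .
  have ps: "dom \<sigma> \<subseteq> {1..n}" "ran \<sigma> \<subseteq> {1..n}" "inj_on \<sigma> (dom \<sigma>)" using SR_pij[OF s] by auto
  have pt: "dom \<tau> \<subseteq> {1..n}" "ran \<tau> \<subseteq> {1..n}" "inj_on \<tau> (dom \<tau>)" using SR_pij[OF t] by auto
  show ?thesis
  proof (cases "inW n \<sigma>")
    case True
    define \<alpha> where "\<alpha> = \<tau> \<circ>\<^sub>m pinv \<sigma>"
    have a: "\<alpha> \<in> SR n" unfolding \<alpha>_def by (rule comp_SR[OF t pinv_SR[OF s]])
    have "(\<alpha> \<circ>\<^sub>m \<sigma>, \<alpha> \<circ>\<^sub>m Map.empty) \<in> \<rho>" using mult_l[OF K[unfolded inK_def] a] .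
    moreover have "\<alpha> \<circ>\<^sub>m \<sigma> = \<tau>"
    proof -
      have "\<alpha> \<circ>\<^sub>m \<sigma> = \<tau> \<circ>\<^sub>m (pinv \<sigma> \<circ>\<^sub>m \<sigma>)" unfolding \<alpha>_def by (rule map_comp_assoc)
      also have "\<dots> = \<tau> \<circ>\<^sub>m id_on (dom \<sigma>)" using pinv_comp_l[OF ps(3)] by simp
      also have "\<dots> = \<tau>" using True pt(1) by (intro comp_id_on_r_eq) (simp add: inW_def)
      finally show ?thesis .
    qed
    ultimately show ?thesis unfolding inK_def by simp
  next
    case False
    have rs: "rk \<sigma> \<le> m" using SR_notW[OF s False] by simp
    have "\<not> inW n \<tau>" using SR_W_rk r rs nm m1 by fastforce
    have fD': "finite (dom \<tau>)" "finite (dom \<sigma>)" using pt ps fin by auto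
    obtain f where f: "f ` dom \<tau> \<subseteq> dom \<sigma>" "inj_on f (dom \<tau>)"
      using card_le_inj[OF fD' r[unfolded rk_def]] by blast
    define \<beta> where "\<beta> = PM (dom \<tau>) f"
    have b: "\<beta> \<in> SR n" unfolding \<beta>_def
    proof (rule SR_I)
      show "inj_on (PM (dom \<tau>) f) (dom (PM (dom \<tau>) f))" by (rule inj_PM[OF f(2)])
      show "pa (dom (PM (dom \<tau>) f))" using SR_notW(1)[OF t \<open>\<not> inW n \<tau>\<close>] by simp
      show "pa (ran (PM (dom \<tau>) f))" using pa_subset[OF SR_notW(1)[OF s False] f(1)] by simp
    qed
    define \<gamma> where "\<gamma> = \<sigma> \<circ>\<^sub>m \<beta>"
    have g: "\<gamma> \<in> SR n" unfolding \<gamma>_def by (rule comp_SR[OF s b])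
    have gi: "inj_on \<gamma> (dom \<gamma>)" using SR_pij[OF g] by simp
    have dg: "dom \<gamma> = dom \<tau>" unfolding \<gamma>_def \<beta>_def using f(1) by (auto simp: dom_comp PM_def)
    define \<alpha> where "\<alpha> = \<tau> \<circ>\<^sub>m pinv \<gamma>"
    have a: "\<alpha> \<in> SR n" unfolding \<alpha>_def by (rule comp_SR[OF t pinv_SR[OF g]])
    have "((\<alpha> \<circ>\<^sub>m \<sigma>) \<circ>\<^sub>m \<beta>, (\<alpha> \<circ>\<^sub>m Map.empty) \<circ>\<^sub>m \<beta>) \<in> \<rho>"
      using mult_r[OF mult_l[OF K[unfolded inK_def] a] b] .
    moreover have "(\<alpha> \<circ>\<^sub>m \<sigma>) \<circ>\<^sub>m \<beta> = \<tau>"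
    proof -
      have "(\<alpha> \<circ>\<^sub>m \<sigma>) \<circ>\<^sub>m \<beta> = \<tau> \<circ>\<^sub>m (pinv \<gamma> \<circ>\<^sub>m \<gamma>)" unfolding \<alpha>_def \<gamma>_def by (simp add: map_comp_assoc)
      also have "\<dots> = \<tau> \<circ>\<^sub>m id_on (dom \<tau>)" using pinv_comp_l[OF gi] dg by simp
      also have "\<dots> = \<tau>" by (intro comp_id_on_r_eq) simp
      finally show ?thesis .
    qed
    ultimately show ?thesis unfolding inK_def by simp
  qed
qed

lemma rk0: assumes "\<xi> \<in> SR n" "rk \<xi> = 0" shows "\<xi> = Map.empty"
proof -
  have "finite (dom \<xi>)" using SR_pij[OF assms(1)] fin by auto
  then have "dom \<xi> = {}" using assms(2) by (simp add: rk_def)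
  then show ?thesis by simp
qed

lemma climb: assumes D: "pa D" "x \<in> D"
  and step: "\<And>E. E \<subseteq> D \<Longrightarrow> x \<in> E \<Longrightarrow> \<exists>a b. (a,b) \<in> \<rho> \<and> rk a = card E \<and> rk b < card E"
  shows "\<forall>\<xi>\<in>SR n. rk \<xi> \<le> card D \<longrightarrow> inK \<xi>"
proof -
  have fD: "finite D" using D pa_iff fin by blast
  have "\<forall>\<xi>\<in>SR n. rk \<xi> \<le> s \<longrightarrow> inK \<xi>" if "s \<le> card D" for s
    using that
  proof (induction s)
    case 0
    then show ?case using rk0 rrefl[OF empty_SR] unfolding inK_def by auto
  next
    case (Suc s)
    have "s \<le> card (D - {x})" using Suc.prems D(2) fD by simp
    then obtain T where T: "T \<subseteq> D - {x}" "card T = s" "finite T" by (rule obtain_subset_with_card_n)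
    define E where "E = insert x T"
    have xT: "x \<notin> T" using T(1) by blast
    have E: "E \<subseteq> D" "x \<in> E" "card E = Suc s" using T D(2) xT unfolding E_def by auto
    obtain a b where ab: "(a,b) \<in> \<rho>" "rk a = card E" "rk b < card E" using step[OF E(1,2)] by blast
    have "inK b" using Suc.IH[rule_format] Suc.prems rho_SR[OF ab(1)] ab(3) E(3) by simp
    then have "inK a" using inK_trans ab(1) by blast
    then show ?case using L0 ab(2) E(3) by auto
  qed
  then show ?thesis by blast
qed

lemma L2d: assumes st: "(\<sigma>,\<tau>) \<in> \<rho>" and x: "x \<in> dom \<sigma>" "x \<notin> dom \<tau>" shows "inK \<sigma>"
proof -
  have s: "\<sigma> \<in> SR n" and t: "\<tau> \<in> SR n" using rho_SR[OF st] by auto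
  define D where "D = (if inW n \<sigma> then maxadm x x else dom \<sigma>)"
  have xn: "x \<in> {1..n}" using SR_pij[OF s] x by auto
  have D: "pa D" "x \<in> D" "D \<subseteq> dom \<sigma>"
    using maxadm_pa[OF xn xn] maxadm_x[OF xn] SR_notW[OF s] maxadm_sub x
    by (auto simp: D_def inW_def)
  have cl: "\<forall>\<xi>\<in>SR n. rk \<xi> \<le> card D \<longrightarrow> inK \<xi>"
  proof (rule climb[OF D(1,2)])
    fix E assume E: "E \<subseteq> D" "x \<in> E"
    have pE: "pa E" using pa_subset[OF D(1) E(1)] .
    have "(\<sigma> \<circ>\<^sub>m id_on E, \<tau> \<circ>\<^sub>m id_on E) \<in> \<rho>" using mult_r[OF st id_on_SR[OF pE]] .
    moreover have "rk (\<sigma> \<circ>\<^sub>m id_on E) = card E" using E D(3) by (intro rk_comp_id_r) auto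
    moreover have "rk (\<tau> \<circ>\<^sub>m id_on E) < card E"
    proof -
      have "E \<inter> dom \<tau> \<subset> E" using E x by auto
      moreover have "finite E" using pE pa_iff fin by blast
      ultimately show ?thesis unfolding rk_def dom_comp_id_on by (rule psubset_card_mono[rotated])
    qed
    ultimately show "\<exists>a b. (a,b) \<in> \<rho> \<and> rk a = card E \<and> rk b < card E" by blast
  qed
  show ?thesis
  proof (cases "inW n \<sigma>")
    case True
    have "\<not> inW n \<tau>" using x xn by (auto simp: inW_def)
    then have "rk \<tau> \<le> m" using SR_notW[OF t] by simp
    moreover have "card D = m" using True maxadm_card[OF xn xn] by (simp add: D_def)
    ultimately have "inK \<tau>" using cl t by simp
    then show ?thesis using inK_trans st by blast
  next
    case False
    then show ?thesis using cl s by (simp add: D_def rk_def)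
  qed
qed

lemma L2r: assumes st: "(\<sigma>,\<tau>) \<in> \<rho>" and x: "x \<in> ran \<sigma>" "x \<notin> ran \<tau>" shows "inK \<sigma>"
proof -
  have s: "\<sigma> \<in> SR n" and t: "\<tau> \<in> SR n" using rho_SR[OF st] by auto
  define D where "D = (if inW n \<sigma> then maxadm x x else ran \<sigma>)"
  have xn: "x \<in> {1..n}" using SR_pij[OF s] x by auto
  have D: "pa D" "x \<in> D" "D \<subseteq> ran \<sigma>"
    using maxadm_pa[OF xn xn] maxadm_x[OF xn] SR_notW[OF s] maxadm_sub x
    by (auto simp: D_def inW_def)
  have cl: "\<forall>\<xi>\<in>SR n. rk \<xi> \<le> card D \<longrightarrow> inK \<xi>"
  proof (rule climb[OF D(1,2)])
    fix E assume E: "E \<subseteq> D" "x \<in> E"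
    have pE: "pa E" using pa_subset[OF D(1) E(1)] .
    have "(id_on E \<circ>\<^sub>m \<sigma>, id_on E \<circ>\<^sub>m \<tau>) \<in> \<rho>" using mult_l[OF st id_on_SR[OF pE]] .
    moreover have "rk (id_on E \<circ>\<^sub>m \<sigma>) = card E" using E D(3) SR_pij[OF s] by (intro rk_comp_id_l) auto
    moreover have "rk (id_on E \<circ>\<^sub>m \<tau>) < card E"
    proof -
      have "rk (id_on E \<circ>\<^sub>m \<tau>) = card (E \<inter> ran \<tau>)"
        unfolding id_on_comp_restrict[of E \<tau>] using SR_pij[OF t] by (intro rk_comp_id_l) auto
      moreover have "E \<inter> ran \<tau> \<subset> E" using E x by auto
      moreover have "finite E" using pE pa_iff fin by blast
      ultimately show ?thesis by (simp add: psubset_card_mono)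
    qed
    ultimately show "\<exists>a b. (a,b) \<in> \<rho> \<and> rk a = card E \<and> rk b < card E" by blast
  qed
  show ?thesis
  proof (cases "inW n \<sigma>")
    case True
    have "\<not> inW n \<tau>" using x xn by (auto simp: inW_def)
    then have "rk \<tau> \<le> m" using SR_notW[OF t] by simp
    moreover have "card D = m" using True maxadm_card[OF xn xn] by (simp add: D_def)
    ultimately have "inK \<tau>" using cl t by simp
    then show ?thesis using inK_trans st by blast
  next
    case False
    have "card D = rk \<sigma>"
    proof -
      have "card (ran \<sigma>) = card (dom \<sigma>)"
      proof -
        have i: "inj_on \<sigma> (dom \<sigma>)" using SR_pij[OF s] by blast
        have "rk (id_on (ran \<sigma>) \<circ>\<^sub>m \<sigma>) = card (ran \<sigma>)" by (rule rk_comp_id_l[OF _ i]) simp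
        then show ?thesis by (simp add: comp_id_on_l_eq rk_def)
      qed
      then show ?thesis using False by (simp add: D_def rk_def)
    qed
    then show ?thesis using cl s by simp
  qed
qed

end


lemma map_to_perm: assumes "finite S" "dom M = S" "ran M \<subseteq> S" "inj_on M S"
  shows "\<exists>\<mu>. \<mu> permutes S \<and> M = PM S \<mu>"
proof -
  define \<mu> where "\<mu> = (\<lambda>i. if i \<in> S then the (M i) else i)"
  have Mi: "\<And>i. i \<in> S \<Longrightarrow> M i = Some (\<mu> i)" using assms(2) unfolding \<mu>_def by auto
  have inj: "inj_on \<mu> S"
  proof (rule inj_onI)
    fix i j assume "i \<in> S" "j \<in> S" "\<mu> i = \<mu> j"
    then have "M i = M j" using Mi by metis
    then show "i = j" using assms(4) \<open>i \<in> S\<close> \<open>j \<in> S\<close> by (meson inj_onD)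
  qed
  have sub: "\<mu> ` S \<subseteq> S" using Mi assms(3) by (auto intro: ranI)
  have "\<mu> ` S = S" by (rule endo_inj_surj[OF assms(1) sub inj])
  then have "bij_betw \<mu> S S" using inj by (simp add: bij_betw_def)
  then have "\<mu> permutes S" by (rule bij_imp_permutes) (simp add: \<mu>_def)
  moreover have "M = PM S \<mu>"
  proof (rule ext)
    fix i show "M i = PM S \<mu> i"
      using Mi assms(2) by (cases "i \<in> S") (auto simp: PM_def)
  qed
  ultimately show ?thesis by blast
qed

context cong_ctx begin

lemma L2: assumes st: "(\<sigma>,\<tau>) \<in> \<rho>" and h: "\<not> H_rel \<sigma> \<tau>" shows "inK \<sigma>"
proof -
  have ts: "(\<tau>,\<sigma>) \<in> \<rho>" using rsym[OF st] .
  consider (d1) x where "x \<in> dom \<sigma>" "x \<notin> dom \<tau>" | (d2) x where "x \<in> dom \<tau>" "x \<notin> dom \<sigma>"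
    | (r1) x where "x \<in> ran \<sigma>" "x \<notin> ran \<tau>" | (r2) x where "x \<in> ran \<tau>" "x \<notin> ran \<sigma>"
    using h unfolding H_rel_def by blast
  then show ?thesis
  proof cases
    case d1 then show ?thesis using L2d[OF st] by blast
  next
    case d2 then show ?thesis using L2d[OF ts] inK_trans[OF st] by blast
  next
    case r1 then show ?thesis using L2r[OF st] by blast
  next
    case r2 then show ?thesis using L2r[OF ts] inK_trans[OF st] by blast
  qed
qed

lemma L3a: assumes st: "(\<sigma>,\<tau>) \<in> \<rho>" and h: "H_rel \<sigma> \<tau>" and ne: "\<sigma> \<noteq> \<tau>" and nw: "\<not> inW n \<sigma>"
  shows "\<exists>\<xi>. inK \<xi> \<and> rk \<xi> = rk \<sigma> - 1"
proof -
  have s: "\<sigma> \<in> SR n" and t: "\<tau> \<in> SR n" using rho_SR[OF st] by auto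
  have it: "inj_on \<tau> (dom \<tau>)" using SR_pij[OF t] by blast
  have ds: "dom \<sigma> = dom \<tau>" "ran \<sigma> = ran \<tau>" using h by (auto simp: H_rel_def)
  obtain x where x: "\<sigma> x \<noteq> \<tau> x" using ne by blast
  have xd: "x \<in> dom \<sigma>"
  proof (rule ccontr)
    assume "x \<notin> dom \<sigma>"
    then have "\<sigma> x = None" "\<tau> x = None" using ds by auto
    then show False using x by simp
  qed
  obtain y where y: "\<sigma> x = Some y" using xd by blast
  obtain y' where y': "\<tau> x = Some y'" using xd ds by (metis domD)
  have yy: "y \<noteq> y'" using x y y' by simp
  have "y' \<in> ran \<sigma>" using y' ds by (auto intro: ranI)
  then obtain x'' where x'': "\<sigma> x'' = Some y'" by (auto simp: ran_def)
  have xx: "x'' \<noteq> x" using x'' y yy by auto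
  define E where "E = dom \<sigma> - {x}"
  have pE: "pa E" unfolding E_def by (rule pa_subset[OF SR_notW(1)[OF s nw]]) blast
  have ab: "(\<sigma> \<circ>\<^sub>m id_on E, \<tau> \<circ>\<^sub>m id_on E) \<in> \<rho>" using mult_r[OF st id_on_SR[OF pE]] .
  have "y' \<in> ran (\<sigma> \<circ>\<^sub>m id_on E)"
  proof -
    have "x'' \<in> E" using x'' xx unfolding E_def by auto
    then have "(\<sigma> \<circ>\<^sub>m id_on E) x'' = Some y'" using x'' by (simp add: comp_id_on_r)
    then show ?thesis by (rule ranI)
  qed
  moreover have "y' \<notin> ran (\<tau> \<circ>\<^sub>m id_on E)"
  proof
    assume "y' \<in> ran (\<tau> \<circ>\<^sub>m id_on E)"
    then obtain e where e: "(\<tau> \<circ>\<^sub>m id_on E) e = Some y'" by (auto simp: ran_def)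
    then have eE: "e \<in> E" and te: "\<tau> e = Some y'" by (auto simp: comp_id_on_r split: if_splits)
    have "e = x" using it te y' by (metis domI inj_on_def)
    then show False using eE unfolding E_def by auto
  qed
  ultimately have "\<not> H_rel (\<sigma> \<circ>\<^sub>m id_on E) (\<tau> \<circ>\<^sub>m id_on E)" unfolding H_rel_def by blast
  then have "inK (\<sigma> \<circ>\<^sub>m id_on E)" using L2[OF ab] by blast
  moreover have "rk (\<sigma> \<circ>\<^sub>m id_on E) = rk \<sigma> - 1"
  proof -
    have "rk (\<sigma> \<circ>\<^sub>m id_on E) = card E" by (rule rk_comp_id_r) (auto simp: E_def)
    moreover have "finite (dom \<sigma>)" using SR_pij[OF s] fin by blast
    ultimately show ?thesis using xd by (simp add: E_def rk_def)
  qed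
  ultimately show ?thesis by blast
qed

lemma L3b: assumes st: "(\<sigma>,\<tau>) \<in> \<rho>" and ne: "\<sigma> \<noteq> \<tau>" and ws: "inW n \<sigma>" and wt: "inW n \<tau>"
  shows "\<exists>\<xi>. inK \<xi> \<and> rk \<xi> = m"
proof -
  have s: "\<sigma> \<in> SR n" and t: "\<tau> \<in> SR n" using rho_SR[OF st] by auto
  have it: "inj_on \<tau> (dom \<tau>)" using SR_pij[OF t] by blast
  have ds: "dom \<sigma> = {1..n}" "dom \<tau> = {1..n}" "ran \<sigma> = {1..n}" "ran \<tau> = {1..n}"
    using ws wt by (auto simp: inW_def)
  obtain x where x: "\<sigma> x \<noteq> \<tau> x" using ne by blast
  have xd: "x \<in> {1..n}"
  proof (rule ccontr)
    assume "x \<notin> {1..n}"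
    then have "\<sigma> x = None" "\<tau> x = None" using ds by auto
    then show False using x by simp
  qed
  obtain y where y: "\<sigma> x = Some y" using xd ds by (metis domD)
  have yn: "y \<in> {1..n}" using y ds by (metis ranI)
  then have "y \<in> ran \<tau>" using ds by simp
  then obtain z where z: "\<tau> z = Some y" by (auto simp: ran_def)
  have zn: "z \<in> {1..n}" using z ds by (metis domI)
  have zx: "z \<noteq> x" using x y z by auto
  define E where "E = maxadm x z"
  have pE: "pa E" unfolding E_def by (rule maxadm_pa[OF xd zn])
  have ab: "(\<sigma> \<circ>\<^sub>m id_on E, \<tau> \<circ>\<^sub>m id_on E) \<in> \<rho>" using mult_r[OF st id_on_SR[OF pE]] .
  have "y \<in> ran (\<sigma> \<circ>\<^sub>m id_on E)"
  proof -
    have "x \<in> E" using maxadm_x[OF xd] unfolding E_def .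
    then have "(\<sigma> \<circ>\<^sub>m id_on E) x = Some y" using y by (simp add: comp_id_on_r)
    then show ?thesis by (rule ranI)
  qed
  moreover have "y \<notin> ran (\<tau> \<circ>\<^sub>m id_on E)"
  proof
    assume "y \<in> ran (\<tau> \<circ>\<^sub>m id_on E)"
    then obtain e where e: "(\<tau> \<circ>\<^sub>m id_on E) e = Some y" by (auto simp: ran_def)
    then have eE: "e \<in> E" and te: "\<tau> e = Some y" by (auto simp: comp_id_on_r split: if_splits)
    have "e = z" using it te z by (metis domI inj_on_def)
    then show False using eE maxadm_z[OF zn zx] unfolding E_def by auto
  qed
  ultimately have "\<not> H_rel (\<sigma> \<circ>\<^sub>m id_on E) (\<tau> \<circ>\<^sub>m id_on E)" unfolding H_rel_def by blast
  then have "inK (\<sigma> \<circ>\<^sub>m id_on E)" using L2[OF ab] by blast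
  moreover have "rk (\<sigma> \<circ>\<^sub>m id_on E) = m"
  proof -
    have "rk (\<sigma> \<circ>\<^sub>m id_on E) = card E" by (rule rk_comp_id_r) (use maxadm_sub ds in \<open>auto simp: E_def\<close>)
    then show ?thesis using maxadm_card[OF xd zn] by (simp add: E_def)
  qed
  ultimately show ?thesis by blast
qed

lemma normal_PM:
  fixes G :: "(nat \<Rightarrow> nat) monoid"
  assumes G: "group G" and mG: "mult G = (\<circ>)" and oG: "one G = id"
    and cS: "\<And>\<mu>. \<mu> \<in> carrier G \<Longrightarrow> \<mu> ` S \<subseteq> S \<and> PM S \<mu> \<in> SR n"
  shows "{\<mu> \<in> carrier G. (id_on S, PM S \<mu>) \<in> \<rho>} \<lhd> G"
proof -
  define R where "R = {(\<mu>,\<nu>). \<mu> \<in> carrier G \<and> \<nu> \<in> carrier G \<and> (PM S \<mu>, PM S \<nu>) \<in> \<rho>}"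
  have "{\<mu> \<in> carrier G. (id, \<mu>) \<in> R} \<lhd> G"
  proof (rule normal_from_rel[OF G mG oG])
    fix \<mu> assume "\<mu> \<in> carrier G" then show "(\<mu>,\<mu>) \<in> R" using cS rrefl unfolding R_def by blast
  next
    fix a b assume "(a,b) \<in> R" then show "(b,a) \<in> R" using rsym unfolding R_def by blast
  next
    fix a b c assume "(a,b) \<in> R" "(b,c) \<in> R" then show "(a,c) \<in> R" using rtrans unfolding R_def by blast
  next
    fix x a b assume x: "x \<in> carrier G" and a: "a \<in> carrier G" and b: "b \<in> carrier G" and ab: "(a,b) \<in> R"
    have "(PM S x \<circ>\<^sub>m PM S a, PM S x \<circ>\<^sub>m PM S b) \<in> \<rho>" using mult_l ab cS[OF x] unfolding R_def by blast
    moreover have "x \<circ> a \<in> carrier G" "x \<circ> b \<in> carrier G" using x a b mG group.is_monoid[OF G] monoid.m_closed by metis+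
    ultimately show "(x \<circ> a, x \<circ> b) \<in> R" unfolding R_def using PM_comp cS a b by auto
  next
    fix x a b assume x: "x \<in> carrier G" and a: "a \<in> carrier G" and b: "b \<in> carrier G" and ab: "(a,b) \<in> R"
    have "(PM S a \<circ>\<^sub>m PM S x, PM S b \<circ>\<^sub>m PM S x) \<in> \<rho>" using mult_r ab cS[OF x] unfolding R_def by blast
    moreover have "a \<circ> x \<in> carrier G" "b \<circ> x \<in> carrier G" using x a b mG group.is_monoid[OF G] monoid.m_closed by metis+
    ultimately show "(a \<circ> x, b \<circ> x) \<in> R" unfolding R_def using PM_comp cS x by auto
  qed
  moreover have "{\<mu> \<in> carrier G. (id, \<mu>) \<in> R} = {\<mu> \<in> carrier G. (id_on S, PM S \<mu>) \<in> \<rho>}"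
  proof -
    have "id \<in> carrier G" using oG group.is_monoid[OF G] monoid.one_closed by metis
    then show ?thesis unfolding R_def id_on_PM by auto
  qed
  ultimately show ?thesis by simp
qed

end


context cong_ctx begin

lemma pa_k: assumes k: "k \<le> m" shows "pa {1..k}"
  unfolding pa_iff
proof (intro conjI ballI)
  show "{1..k} \<subseteq> {1..n}" using k nm by auto
  fix x assume x: "x \<in> {1..k}"
  have "\<theta> x = n + 1 - x" by (simp add: theta_def)
  moreover have "x \<le> k" using x by simp
  ultimately have "\<theta> x > k" using k nm by linarith
  then show "\<theta> x \<notin> {1..k}" by simp
qed

lemma PM_sym_SR: assumes k: "k \<le> m" and \<mu>: "\<mu> permutes {1..k}" shows "PM {1..k} \<mu> \<in> SR n"
proof (rule SR_I)
  show "inj_on (PM {1..k} \<mu>) (dom (PM {1..k} \<mu>))" by (rule inj_PM[OF permutes_inj_on[OF \<mu>]])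
  show "pa (dom (PM {1..k} \<mu>))" using pa_k[OF k] by simp
  show "pa (ran (PM {1..k} \<mu>))" using pa_k[OF k] permutes_image[OF \<mu>] by simp
qed

lemma PM_W_SR: assumes \<mu>: "\<mu> \<in> carrier (W_group n)" shows "PM {1..n} \<mu> \<in> SR n"
proof -
  have p: "\<mu> permutes {1..n}" and th: "\<forall>i\<in>{1..n}. \<mu> (\<theta> i) = \<theta> (\<mu> i)" using \<mu> by (auto simp: W_group_def)
  have "partial_inj n (PM {1..n} \<mu>)" unfolding partial_inj_def
    using inj_PM[OF permutes_inj_on[OF p]] permutes_image[OF p] by simp
  moreover have "\<forall>i\<in>{1..n}. PM {1..n} \<mu> (\<theta> i) = map_option \<theta> (PM {1..n} \<mu> i)"
  proof
    fix i assume i: "i \<in> {1..n}"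
    have "\<theta> i \<in> {1..n}" using theta_in[OF i] .
    then show "PM {1..n} \<mu> (\<theta> i) = map_option \<theta> (PM {1..n} \<mu> i)" using i th unfolding PM_def by simp
  qed
  ultimately have "inW n (PM {1..n} \<mu>)" unfolding inW_def using permutes_image[OF p] by simp
  then show ?thesis unfolding SR_def inW_def by simp
qed

lemma rk_fin: "\<sigma> \<in> SR n \<Longrightarrow> finite (dom \<sigma>)" by (rule fin) (use SR_pij in blast)

theorem main:
  assumes nu: "\<rho> \<noteq> SR n \<times> SR n"
  shows "(\<exists>k\<in>{1..m}. \<exists>N. N \<lhd> sym_group k \<and> \<rho> = congS n k N)
       \<or> (\<exists>N. N \<lhd> W_group n \<and> \<rho> = congW n N)"
proof -
  define Ks where "Ks = rk ` {\<sigma>. inK \<sigma>}"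
  have Ksf: "finite Ks"
  proof -
    have "Ks \<subseteq> {0..n}" unfolding Ks_def using inK_SR SR_rk by auto
    then show ?thesis using finite_subset by blast
  qed
  have e0: "inK Map.empty" unfolding inK_def using rrefl[OF empty_SR] .
  then have Ksne: "Ks \<noteq> {}" unfolding Ks_def by blast
  define j where "j = Max Ks"
  have Kchar: "\<And>\<tau>. \<tau> \<in> SR n \<Longrightarrow> inK \<tau> \<longleftrightarrow> rk \<tau> \<le> j"
  proof
    fix \<tau> assume "\<tau> \<in> SR n" "inK \<tau>"
    then show "rk \<tau> \<le> j" unfolding j_def Ks_def using Ksf Ks_def by (intro Max_ge) auto
  next
    fix \<tau> assume t: "\<tau> \<in> SR n" "rk \<tau> \<le> j"
    have "j \<in> Ks" unfolding j_def using Max_in[OF Ksf Ksne] .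
    then obtain \<sigma>0 where "inK \<sigma>0" "rk \<sigma>0 = j" unfolding Ks_def by blast
    then show "inK \<tau>" using L0 t by auto
  qed
  have jm: "j \<le> m"
  proof (rule ccontr)
    assume "\<not> j \<le> m"
    have "j \<in> Ks" unfolding j_def using Max_in[OF Ksf Ksne] .
    then obtain \<sigma>0 where s0: "inK \<sigma>0" "rk \<sigma>0 = j" unfolding Ks_def by blast
    then have "inW n \<sigma>0" using SR_notW(3)[OF inK_SR[OF s0(1)]] \<open>\<not> j \<le> m\<close> by auto
    then have "j = n" using SR_W_rk s0 by simp
    have "\<rho> = SR n \<times> SR n"
    proof
      show "\<rho> \<subseteq> SR n \<times> SR n" using rho_SR by auto
      show "SR n \<times> SR n \<subseteq> \<rho>"
      proof
        fix p assume "p \<in> SR n \<times> SR n"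
        then obtain a b where p: "p = (a,b)" "a \<in> SR n" "b \<in> SR n" by blast
        then have "inK a" "inK b" using Kchar SR_rk \<open>j = n\<close> by auto
        then show "p \<in> \<rho>" using inK_pair p(1) by simp
      qed
    qed
    then show False using nu by simp
  qed
  show ?thesis
  proof (cases "j = m")
    case True
    define N where "N = {\<mu> \<in> carrier (W_group n). (id_on {1..n}, PM {1..n} \<mu>) \<in> \<rho>}"
    have "N \<lhd> W_group n" unfolding N_def
    proof (rule normal_PM[OF W_group_is_group])
      show "mult (W_group n) = (\<circ>)" "one (W_group n) = id" by (simp_all add: W_group_def)
      fix \<mu> assume \<mu>: "\<mu> \<in> carrier (W_group n)"
      then have "\<mu> permutes {1..n}" by (simp add: W_group_def)
      then show "\<mu> ` {1..n} \<subseteq> {1..n} \<and> PM {1..n} \<mu> \<in> SR n" using PM_W_SR[OF \<mu>] permutes_image by blast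
    qed
    moreover have "\<rho> = congW n N"
    proof -
      have key: "(\<sigma>,\<tau>) \<in> \<rho> \<longleftrightarrow> (\<sigma>,\<tau>) \<in> congW n N" for \<sigma> \<tau>
      proof (cases "\<sigma> \<in> SR n \<and> \<tau> \<in> SR n")
        case False
        then show ?thesis using rho_SR by (auto simp: congW_def)
      next
        case True
        then have s: "\<sigma> \<in> SR n" and t: "\<tau> \<in> SR n" by auto
        show ?thesis
        proof (cases "rk \<sigma> < n")
          case lt: True
          have "\<not> inW n \<sigma>" using SR_W_rk lt by auto
          then have "inK \<sigma>" using Kchar[OF s] SR_notW(3)[OF s] \<open>j = m\<close> by simp
          then have "(\<sigma>,\<tau>) \<in> \<rho> \<longleftrightarrow> inK \<tau>" using inK_trans inK_trans2 inK_pair by blast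
          also have "\<dots> \<longleftrightarrow> rk \<tau> < n"
          proof -
            have "inK \<tau> \<longleftrightarrow> rk \<tau> \<le> m" using Kchar[OF t] \<open>j = m\<close> by simp
            moreover have "rk \<tau> \<le> m \<longleftrightarrow> rk \<tau> < n"
              using SR_W_iff[OF t] SR_notW(3)[OF t] SR_rk[OF t] nm m1 by auto
            ultimately show ?thesis by simp
          qed
          finally show ?thesis using lt s t by (simp add: congW_def)
        next
          case False
          then have rn: "rk \<sigma> = n" using SR_rk[OF s] by simp
          then have ws: "inW n \<sigma>" using SR_W_iff[OF s] by simp
          have nK: "\<not> inK \<sigma>" using Kchar[OF s] rn \<open>j = m\<close> nm m1 by simp
          have ps: "dom \<sigma> = {1..n}" "ran \<sigma> = {1..n}" "inj_on \<sigma> (dom \<sigma>)"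
            using ws by (auto simp: inW_def partial_inj_def)
          have cw: "(\<sigma>,\<tau>) \<in> congW n N \<longleftrightarrow> (\<exists>\<mu>\<in>N. \<forall>i\<in>{1..n}. \<tau> i = \<sigma> (\<mu> i))"
            using s t rn by (simp add: congW_def)
          show ?thesis unfolding cw
          proof
            assume st: "(\<sigma>,\<tau>) \<in> \<rho>"
            have h: "H_rel \<sigma> \<tau>" using L2[OF st] nK by blast
            then have wt: "inW n \<tau>" using SR_domfull[OF t] ps by (simp add: H_rel_def)
            have pt: "dom \<tau> = {1..n}" "ran \<tau> = {1..n}" "inj_on \<tau> (dom \<tau>)"
              using wt by (auto simp: inW_def partial_inj_def)
            define M where "M = pinv \<sigma> \<circ>\<^sub>m \<tau>"
            have Ms: "M \<in> SR n" unfolding M_def by (rule comp_SR[OF pinv_SR[OF s] t])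
            have rel: "(id_on {1..n}, M) \<in> \<rho>"
              using mult_l[OF st pinv_SR[OF s]] pinv_comp_l[OF ps(3)] ps(1) unfolding M_def by simp
            have dM: "dom M = {1..n}"
            proof
              show "dom M \<subseteq> {1..n}" using SR_pij[OF Ms] by blast
              show "{1..n} \<subseteq> dom M"
              proof
                fix i assume i: "i \<in> {1..n}"
                then obtain y where y: "\<tau> i = Some y" using pt(1) by (metis domD)
                then have "y \<in> dom (pinv \<sigma>)" using pt(2) ps(2) by (auto intro: ranI)
                then show "i \<in> dom M" using y unfolding M_def dom_comp by blast
              qed
            qed
            have wM: "inW n M" by (rule SR_domfull[OF Ms dM])
            obtain \<mu> where \<mu>: "\<mu> permutes {1..n}" "M = PM {1..n} \<mu>"
              using map_to_perm[of "{1..n}" M] dM SR_pij[OF Ms] by auto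
            have "\<forall>i\<in>{1..n}. \<mu> (\<theta> i) = \<theta> (\<mu> i)"
            proof
              fix i assume i: "i \<in> {1..n}"
              have "M (\<theta> i) = map_option \<theta> (M i)" using wM i by (simp add: inW_def)
              then show "\<mu> (\<theta> i) = \<theta> (\<mu> i)" using i theta_in[OF i] \<mu>(2) by (simp add: PM_def)
            qed
            then have \<mu>W: "\<mu> \<in> carrier (W_group n)" using \<mu>(1) by (simp add: W_group_def)
            then have "\<mu> \<in> N" unfolding N_def using rel \<mu>(2) by simp
            moreover have "\<forall>i\<in>{1..n}. \<tau> i = \<sigma> (\<mu> i)"
            proof
              fix i assume i: "i \<in> {1..n}"
              have "\<sigma> \<circ>\<^sub>m M = (\<sigma> \<circ>\<^sub>m pinv \<sigma>) \<circ>\<^sub>m \<tau>" unfolding M_def by (simp add: map_comp_assoc)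
              also have "\<dots> = \<tau>" using pinv_comp_r[OF ps(3)] ps(2) pt(2) comp_id_on_l_eq[of \<tau> "{1..n}"] by simp
              finally have "(\<sigma> \<circ>\<^sub>m M) i = \<tau> i" by simp
              then show "\<tau> i = \<sigma> (\<mu> i)" using i \<mu>(2) by (simp add: PM_def)
            qed
            ultimately show "\<exists>\<mu>\<in>N. \<forall>i\<in>{1..n}. \<tau> i = \<sigma> (\<mu> i)" by blast
          next
            assume "\<exists>\<mu>\<in>N. \<forall>i\<in>{1..n}. \<tau> i = \<sigma> (\<mu> i)"
            then obtain \<mu> where \<mu>: "\<mu> \<in> N" "\<forall>i\<in>{1..n}. \<tau> i = \<sigma> (\<mu> i)" by blast
            have rel: "(id_on {1..n}, PM {1..n} \<mu>) \<in> \<rho>" using \<mu>(1) unfolding N_def by simp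
            have "(\<sigma> \<circ>\<^sub>m id_on {1..n}, \<sigma> \<circ>\<^sub>m PM {1..n} \<mu>) \<in> \<rho>" by (rule mult_l[OF rel s])
            moreover have "\<sigma> \<circ>\<^sub>m id_on {1..n} = \<sigma>" using ps(1) by (simp add: comp_id_on_r_eq)
            moreover have "\<sigma> \<circ>\<^sub>m PM {1..n} \<mu> = \<tau>"
            proof (rule ext)
              fix x show "(\<sigma> \<circ>\<^sub>m PM {1..n} \<mu>) x = \<tau> x"
              proof (cases "x \<in> {1..n}")
                case True then show ?thesis using \<mu>(2) by (simp add: PM_def)
              next
                case False
                then have "\<tau> x = None" using SR_pij[OF t] by blast
                then show ?thesis using False by (simp add: PM_def)
              qed
            qed
            ultimately show "(\<sigma>,\<tau>) \<in> \<rho>" by simp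
          qed
        qed
      qed
      show ?thesis unfolding set_eq_iff split_paired_All using key by blast
    qed
    ultimately show ?thesis by blast
  next
    case False
    then have jm': "j < m" using jm by simp
    define k where "k = Suc j"
    have k: "k \<in> {1..m}" "k \<le> m" using jm' unfolding k_def by auto
    define N where "N = {\<mu> \<in> carrier (sym_group k). (id_on {1..k}, PM {1..k} \<mu>) \<in> \<rho>}"
    have "N \<lhd> sym_group k" unfolding N_def
    proof (rule normal_PM[OF sym_group_is_group])
      show "mult (sym_group k) = (\<circ>)" "one (sym_group k) = id" by (simp_all add: sym_group_def)
      fix \<mu> assume \<mu>: "\<mu> \<in> carrier (sym_group k)"
      then have "\<mu> permutes {1..k}" by (simp add: sym_group_def)
      then show "\<mu> ` {1..k} \<subseteq> {1..k} \<and> PM {1..k} \<mu> \<in> SR n" using PM_sym_SR[OF k(2)] permutes_image by blast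
    qed
    moreover have "\<rho> = congS n k N"
    proof -
      have key: "(\<sigma>,\<tau>) \<in> \<rho> \<longleftrightarrow> (\<sigma>,\<tau>) \<in> congS n k N" for \<sigma> \<tau>
      proof (cases "\<sigma> \<in> SR n \<and> \<tau> \<in> SR n")
        case False
        then show ?thesis using rho_SR by (auto simp: congS_def)
      next
        case True
        then have s: "\<sigma> \<in> SR n" and t: "\<tau> \<in> SR n" by auto
        show ?thesis
        proof (cases "rk \<sigma> < k")
          case lt: True
          then have "inK \<sigma>" using Kchar[OF s] unfolding k_def by simp
          then have "(\<sigma>,\<tau>) \<in> \<rho> \<longleftrightarrow> inK \<tau>" using inK_trans inK_trans2 inK_pair by blast
          also have "\<dots> \<longleftrightarrow> rk \<tau> < k" using Kchar[OF t] unfolding k_def by (simp add: less_Suc_eq_le)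
          finally show ?thesis using lt s t by (simp add: congS_def)
        next
          case ge: False
          show ?thesis
          proof (cases "rk \<sigma> = k")
            case eq: True
            have nK: "\<not> inK \<sigma>" using Kchar[OF s] eq unfolding k_def by simp
            have nw: "\<not> inW n \<sigma>" using SR_W_rk eq k(2) nm m1 by fastforce
            have pds: "pa (dom \<sigma>)" using SR_notW(1)[OF s nw] .
            have isj: "inj_on \<sigma> (dom \<sigma>)" using SR_pij[OF s] by blast
            have cs: "(\<sigma>,\<tau>) \<in> congS n k N \<longleftrightarrow> H_rel \<sigma> \<tau> \<and> (\<exists>a. bij_betw a {1..k} (dom \<sigma>) \<and>
                 (\<exists>\<mu>\<in>N. \<forall>i\<in>{1..k}. \<tau> (a i) = \<sigma> (a (\<mu> i))))"
              using s t eq by (simp add: congS_def)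
            have Afacts: "PM {1..k} a \<in> SR n \<and> inj_on (PM {1..k} a) (dom (PM {1..k} a)) \<and> ran (PM {1..k} a) = dom \<sigma>
                 \<and> (\<forall>i\<in>{1..k}. a i \<in> dom \<sigma>)"
              if a: "bij_betw a {1..k} (dom \<sigma>)" for a
            proof -
              have ia: "inj_on a {1..k}" and ima: "a ` {1..k} = dom \<sigma>" using a by (auto simp: bij_betw_def)
              have "PM {1..k} a \<in> SR n"
              proof (rule SR_I)
                show "inj_on (PM {1..k} a) (dom (PM {1..k} a))" by (rule inj_PM[OF ia])
                show "pa (dom (PM {1..k} a))" using pa_k[OF k(2)] by simp
                show "pa (ran (PM {1..k} a))" using pds ima by simp
              qed
              then show ?thesis using inj_PM[OF ia] ima by auto
            qed
            show ?thesis unfolding cs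
            proof
              assume st: "(\<sigma>,\<tau>) \<in> \<rho>"
              have h: "H_rel \<sigma> \<tau>" using L2[OF st] nK by blast
              then have ds: "dom \<sigma> = dom \<tau>" "ran \<sigma> = ran \<tau>" by (auto simp: H_rel_def)
              obtain a where a: "bij_betw a {1..k} (dom \<sigma>)"
                using ex_bij_betw_nat_finite_1[OF rk_fin[OF s]] eq unfolding rk_def by auto
              have ima: "a ` {1..k} = dom \<sigma>" using a by (auto simp: bij_betw_def)
              define A where "A = PM {1..k} a"
              have As: "A \<in> SR n" and iA: "inj_on A (dom A)" and rA: "ran A = dom \<sigma>"
                and ad: "\<forall>i\<in>{1..k}. a i \<in> dom \<sigma>"
                using Afacts[OF a] unfolding A_def by auto
              have Ai: "\<And>i. i \<in> {1..k} \<Longrightarrow> A i = Some (a i)" by (simp add: A_def PM_def)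
              define B where "B = \<sigma> \<circ>\<^sub>m A"
              have Bs: "B \<in> SR n" unfolding B_def by (rule comp_SR[OF s As])
              have iB: "inj_on B (dom B)" using SR_pij[OF Bs] by blast
              have dB: "dom B = {1..k}"
              proof
                show "dom B \<subseteq> {1..k}" unfolding B_def using dom_comp_sub[of \<sigma> A] by (simp add: A_def)
                show "{1..k} \<subseteq> dom B"
                proof
                  fix i assume i: "i \<in> {1..k}"
                  then show "i \<in> dom B" unfolding B_def dom_comp using Ai ad by auto
                qed
              qed
              have rB: "ran B = ran \<sigma>"
              proof
                show "ran B \<subseteq> ran \<sigma>" unfolding B_def by (rule ran_comp_sub)
                show "ran \<sigma> \<subseteq> ran B"
                proof
                  fix y assume "y \<in> ran \<sigma>"
                  then obtain x where x: "\<sigma> x = Some y" by (auto simp: ran_def)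
                  then have "x \<in> a ` {1..k}" using ima by blast
                  then obtain i where i: "i \<in> {1..k}" "x = a i" by blast
                  then have "B i = Some y" using x Ai unfolding B_def by simp
                  then show "y \<in> ran B" by (rule ranI)
                qed
              qed
              define M where "M = pinv B \<circ>\<^sub>m (\<tau> \<circ>\<^sub>m A)"
              have Ms: "M \<in> SR n" unfolding M_def by (rule comp_SR[OF pinv_SR[OF Bs] comp_SR[OF t As]])
              have rel: "(id_on {1..k}, M) \<in> \<rho>"
              proof -
                have "(pinv B \<circ>\<^sub>m (\<sigma> \<circ>\<^sub>m A), pinv B \<circ>\<^sub>m (\<tau> \<circ>\<^sub>m A)) \<in> \<rho>"
                  by (rule mult_l[OF mult_r[OF st As] pinv_SR[OF Bs]])
                moreover have "pinv B \<circ>\<^sub>m (\<sigma> \<circ>\<^sub>m A) = id_on {1..k}"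
                  using pinv_comp_l[OF iB] dB unfolding B_def by simp
                ultimately show ?thesis unfolding M_def by simp
              qed
              have dM: "dom M = {1..k}"
              proof
                have "dom M \<subseteq> dom (\<tau> \<circ>\<^sub>m A)" unfolding M_def by (rule dom_comp_sub)
                also have "\<dots> \<subseteq> dom A" by (rule dom_comp_sub)
                finally show "dom M \<subseteq> {1..k}" by (simp add: A_def)
                show "{1..k} \<subseteq> dom M"
                proof
                  fix i assume i: "i \<in> {1..k}"
                  have "a i \<in> dom \<tau>" using ad i ds by auto
                  then obtain y where y: "\<tau> (a i) = Some y" by blast
                  then have "y \<in> ran B" using rB ds by (auto intro: ranI)
                  then obtain z where z: "pinv B y = Some z" using pinv_Some_iff[OF iB] by (auto simp: ran_def)
                  have "M i = pinv B y" unfolding M_def using y Ai[OF i] by simp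
                  then show "i \<in> dom M" using z by auto
                qed
              qed
              have rM: "ran M \<subseteq> {1..k}"
              proof -
                have "ran M \<subseteq> ran (pinv B)" unfolding M_def by (rule ran_comp_sub)
                then show ?thesis using ran_pinv[OF iB] dB by simp
              qed
              obtain \<mu> where \<mu>: "\<mu> permutes {1..k}" "M = PM {1..k} \<mu>"
                using map_to_perm[of "{1..k}" M] dM rM SR_pij[OF Ms] by auto
              have "\<mu> \<in> N" unfolding N_def using \<mu> rel by (simp add: sym_group_carrier)
              moreover have "\<forall>i\<in>{1..k}. \<tau> (a i) = \<sigma> (a (\<mu> i))"
              proof
                fix i assume i: "i \<in> {1..k}"
                have "B \<circ>\<^sub>m M = (B \<circ>\<^sub>m pinv B) \<circ>\<^sub>m (\<tau> \<circ>\<^sub>m A)" unfolding M_def by (simp add: map_comp_assoc)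
                also have "\<dots> = id_on (ran B) \<circ>\<^sub>m (\<tau> \<circ>\<^sub>m A)" using pinv_comp_r[OF iB] by simp
                also have "\<dots> = \<tau> \<circ>\<^sub>m A"
                proof (rule comp_id_on_l_eq)
                  show "ran (\<tau> \<circ>\<^sub>m A) \<subseteq> ran B" using ran_comp_sub[of \<tau> A] rB ds by simp
                qed
                finally have "(B \<circ>\<^sub>m M) i = (\<tau> \<circ>\<^sub>m A) i" by simp
                moreover have "\<mu> i \<in> {1..k}" using permutes_in_image[OF \<mu>(1)] i by simp
                ultimately show "\<tau> (a i) = \<sigma> (a (\<mu> i))" using i \<mu>(2) Ai unfolding B_def by (simp add: PM_def)
              qed
              ultimately show "H_rel \<sigma> \<tau> \<and> (\<exists>a. bij_betw a {1..k} (dom \<sigma>) \<and>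
                 (\<exists>\<mu>\<in>N. \<forall>i\<in>{1..k}. \<tau> (a i) = \<sigma> (a (\<mu> i))))" using h a by blast
            next
              assume "H_rel \<sigma> \<tau> \<and> (\<exists>a. bij_betw a {1..k} (dom \<sigma>) \<and>
                 (\<exists>\<mu>\<in>N. \<forall>i\<in>{1..k}. \<tau> (a i) = \<sigma> (a (\<mu> i))))"
              then obtain a \<mu> where h: "H_rel \<sigma> \<tau>" and a: "bij_betw a {1..k} (dom \<sigma>)" and \<mu>N: "\<mu> \<in> N"
                and ta: "\<forall>i\<in>{1..k}. \<tau> (a i) = \<sigma> (a (\<mu> i))" by blast
              have ds: "dom \<sigma> = dom \<tau>" using h by (auto simp: H_rel_def)
              have ima: "a ` {1..k} = dom \<sigma>" using a by (auto simp: bij_betw_def)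
              define A where "A = PM {1..k} a"
              have As: "A \<in> SR n" and iA: "inj_on A (dom A)" and rA: "ran A = dom \<sigma>"
                using Afacts[OF a] unfolding A_def by auto
              have Ai: "\<And>i. i \<in> {1..k} \<Longrightarrow> A i = Some (a i)" by (simp add: A_def PM_def)
              define B where "B = \<sigma> \<circ>\<^sub>m A"
              have Bs: "B \<in> SR n" unfolding B_def by (rule comp_SR[OF s As])
              have rel: "(id_on {1..k}, PM {1..k} \<mu>) \<in> \<rho>" using \<mu>N unfolding N_def by simp
              have \<mu>p: "\<mu> permutes {1..k}" using \<mu>N unfolding N_def by (simp add: sym_group_carrier)
              have r2: "((B \<circ>\<^sub>m id_on {1..k}) \<circ>\<^sub>m pinv A, (B \<circ>\<^sub>m PM {1..k} \<mu>) \<circ>\<^sub>m pinv A) \<in> \<rho>"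
                by (rule mult_r[OF mult_l[OF rel Bs] pinv_SR[OF As]])
              have pA: "\<And>x. x \<in> dom \<sigma> \<Longrightarrow> \<exists>i\<in>{1..k}. x = a i \<and> pinv A x = Some i"
              proof -
                fix x assume "x \<in> dom \<sigma>"
                then obtain i where i: "i \<in> {1..k}" "x = a i" using ima by blast
                then have "pinv A x = Some i" using pinv_Some[OF iA Ai[OF i(1)]] by simp
                then show "\<exists>i\<in>{1..k}. x = a i \<and> pinv A x = Some i" using i by blast
              qed
              have pN: "\<And>x. x \<notin> dom \<sigma> \<Longrightarrow> pinv A x = None" using rA pinv_None by blast
              have e1: "(B \<circ>\<^sub>m id_on {1..k}) \<circ>\<^sub>m pinv A = \<sigma>"
              proof (rule ext)
                fix x show "((B \<circ>\<^sub>m id_on {1..k}) \<circ>\<^sub>m pinv A) x = \<sigma> x"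
                proof (cases "x \<in> dom \<sigma>")
                  case True
                  then obtain i where i: "i \<in> {1..k}" "x = a i" "pinv A x = Some i" using pA by blast
                  then show ?thesis using Ai[OF i(1)] unfolding B_def by (simp add: comp_id_on_r)
                next
                  case False
                  then show ?thesis using pN[OF False] by (simp add: domIff)
                qed
              qed
              have e2: "(B \<circ>\<^sub>m PM {1..k} \<mu>) \<circ>\<^sub>m pinv A = \<tau>"
              proof (rule ext)
                fix x show "((B \<circ>\<^sub>m PM {1..k} \<mu>) \<circ>\<^sub>m pinv A) x = \<tau> x"
                proof (cases "x \<in> dom \<sigma>")
                  case True
                  then obtain i where i: "i \<in> {1..k}" "x = a i" "pinv A x = Some i" using pA by blast
                  have "\<mu> i \<in> {1..k}" using permutes_in_image[OF \<mu>p] i(1) by simp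
                  then show ?thesis using i ta Ai unfolding B_def by (simp add: PM_def)
                next
                  case False
                  then have "\<tau> x = None" using ds by (simp add: domIff)
                  then show ?thesis using pN[OF False] by simp
                qed
              qed
              show "(\<sigma>,\<tau>) \<in> \<rho>" using r2 e1 e2 by simp
            qed
          next
            case gt: False
            then have gt': "rk \<sigma> > k" using ge by simp
            have nK: "\<not> inK \<sigma>" using Kchar[OF s] gt' unfolding k_def by simp
            have cs: "(\<sigma>,\<tau>) \<in> congS n k N \<longleftrightarrow> \<sigma> = \<tau>" using s t ge gt by (simp add: congS_def)
            show ?thesis unfolding cs
            proof
              assume st: "(\<sigma>,\<tau>) \<in> \<rho>"
              show "\<sigma> = \<tau>"
              proof (rule ccontr)
                assume ne: "\<sigma> \<noteq> \<tau>"
                have h: "H_rel \<sigma> \<tau>" using L2[OF st] nK by blast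
                show False
                proof (cases "inW n \<sigma>")
                  case True
                  have "dom \<tau> = {1..n}" using h True by (simp add: H_rel_def inW_def)
                  then have "inW n \<tau>" using SR_domfull[OF t] by simp
                  then obtain \<xi> where "inK \<xi>" "rk \<xi> = m" using L3b[OF st ne True] by blast
                  then show False using Kchar[OF inK_SR] jm' by fastforce
                next
                  case False
                  then obtain \<xi> where "inK \<xi>" "rk \<xi> = rk \<sigma> - 1" using L3a[OF st h ne] by blast
                  then show False using Kchar[OF inK_SR] gt' unfolding k_def by fastforce
                qed
              qed
            next
              assume "\<sigma> = \<tau>"
              then show "(\<sigma>,\<tau>) \<in> \<rho>" using rrefl s by simp
            qed
          qed
        qed
      qed
      show ?thesis unfolding set_eq_iff split_paired_All using key by blast
    qed
    ultimately show ?thesis using k by blast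
  qed
qed

end


theorem theorem5p2:
  fixes m n :: nat and \<rho> :: "((nat \<rightharpoonup> nat) \<times> (nat \<rightharpoonup> nat)) set"
  assumes "m \<ge> 1" and "n = 2 * m"
    and "is_congruence n \<rho>"
    and "\<rho> \<noteq> SR n \<times> SR n"
  shows "(\<exists>k\<in>{1..m}. \<exists>N. N \<lhd> sym_group k \<and> \<rho> = congS n k N)
       \<or> (\<exists>N. N \<lhd> W_group n \<and> \<rho> = congW n N)"
proof -
  interpret c: cong_ctx m n \<rho> by unfold_locales (use assms in auto)
  show ?thesis by (rule c.main[OF assms(4)])
qed

end
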